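(* For every $n\geq1$ and all $i,j\in I$ with $|i|<|j|$ we have $C^{(n)}_{ij}\cdot v=0$.
   Context: Let $N\geq1$, $I=\{-N,\dots,-1,1,\dots,N\}$, and for $k\in I$ put $\bar k=0$ if $k>0$, $\bar k=1$ if $k<0$. The Lie superalgebra $\mathfrak{q}(N)$ over $\mathbb{C}$ is spanned by elements $F_{ij}$ ($i,j\in I$) with $F_{-i,-j}=F_{ij}$ (realized as $F_{ij}=E_{ij}+E_{-i,-j}\in\mathfrak{gl}(N|N)$), $F_{ij}$ of parity $\bar\imath+\bar\jmath\bmod 2$, and supercommutator $$[F_{ij}, F_{kl}] = \delta_{kj} F_{il} - (-1)^{(\bar{\imath}+ \bar{\jmath})(\bar{k} + \bar{l})} \delta_{il} F_{kj} + \delta_{k,-j} F_{-i,l} - (-1)^{(\bar{\imath} + \bar{\jmath})(\bar{k} + \bar{l})} \delta_{-i,l} F_{k,-j}.$$ For $n\geq1$ define $C^{(n)}_{ij}\in U(\mathfrak{q}(N))$ by $$C^{(n)}_{ij} = \sum_{k_1,\ldots,k_{n-1}\in I}F_{ik_1} (-1)^{\bar{k}_1} F_{k_1k_2} (-1)^{\bar{k}_2} \cdots F_{k_{n-2}k_{n-1}} (-1)^{\bar{k}_{n-1}} F_{k_{n-1}j}$$ (so $C^{(1)}_{ij}=F_{ij}$). Let $V$ be a representation of $\mathfrak{q}(N)$ and $v\in V$ a vector such that $F_{ij}\cdot v=0$ whenever $|i|<|j|$, and $F_{ii}\cdot v=\lambda_i v$ for $i=1,\dots,N$, where $\lambda_1,\dots,\lambda_N\in\mathbb{C}$.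 *)

theory Defs
  imports Complex_Main
begin

definition idx :: "nat \<Rightarrow> int set" where
  "idx N = {- int N .. int N} - {0}"

definition par :: "int \<Rightarrow> nat" where
  "par k = (if k > 0 then 0 else 1)"

definition sgn4 :: "int \<Rightarrow> int \<Rightarrow> int \<Rightarrow> int \<Rightarrow> complex" where
  "sgn4 i j k l = (-1) ^ ((par i + par j) * (par k + par l))"

text \<open>A representation of q(N) on a complex vector space V (scalar multiplication smul):
  rho i j is the (linear) operator by which F_ij acts, F_{-i,-j} = F_ij, and the operators
  satisfy the defining supercommutator relations of q(N), i.e. V is a U(q(N))-module.\<close>
definition q_rep ::
  "(complex \<Rightarrow> 'v::ab_group_add \<Rightarrow> 'v) \<Rightarrow> nat \<Rightarrow> (int \<Rightarrow> int \<Rightarrow> 'v \<Rightarrow> 'v) \<Rightarrow> bool" where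
  "q_rep smul N rho \<longleftrightarrow>
     vector_space smul \<and>
     (\<forall>i\<in>idx N. \<forall>j\<in>idx N. Vector_Spaces.linear smul smul (rho i j)) \<and>
     (\<forall>i\<in>idx N. \<forall>j\<in>idx N. rho (-i) (-j) = rho i j) \<and>
     (\<forall>i\<in>idx N. \<forall>j\<in>idx N. \<forall>k\<in>idx N. \<forall>l\<in>idx N. \<forall>w.
        rho i j (rho k l w) - smul (sgn4 i j k l) (rho k l (rho i j w)) =
          (if k = j then rho i l w else 0)
          - smul (sgn4 i j k l) (if i = l then rho k j w else 0)
          + (if k = - j then rho (- i) l w else 0)
          - smul (sgn4 i j k l) (if - i = l then rho k (- j) w else 0))"

text \<open>Cop smul N rho n i j is the operator C^(n)_ij for n \<ge> 1,
  via C^(1)_ij = F_ij and C^(n+1)_ij = \<Sum>_k F_ik (-1)^(bar k) C^(n)_kj.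
  (The value at n = 0 is an unused dummy.)\<close>
fun Cop ::
  "(complex \<Rightarrow> 'v::ab_group_add \<Rightarrow> 'v) \<Rightarrow> nat \<Rightarrow> (int \<Rightarrow> int \<Rightarrow> 'v \<Rightarrow> 'v) \<Rightarrow> nat
     \<Rightarrow> int \<Rightarrow> int \<Rightarrow> 'v \<Rightarrow> 'v" where
  "Cop smul N rho 0 i j = (\<lambda>w. 0)"
| "Cop smul N rho (Suc 0) i j = rho i j"
| "Cop smul N rho (Suc (Suc n)) i j =
     (\<lambda>w. \<Sum>k\<in>idx N. rho i k (smul ((-1) ^ par k) (Cop smul N rho (Suc n) k j w)))"

end

theory Submission
  imports Defs
begin

lemma idx_neg: "x \<in> idx N \<Longrightarrow> - x \<in> idx N"
  by (auto simp: idx_def)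

lemma idx_nz: "x \<in> idx N \<Longrightarrow> x \<noteq> 0"
  by (auto simp: idx_def)

lemma idx_fin: "finite (idx N)"
  by (auto simp: idx_def)

lemma sgn4_mult: "sgn4 a b c k * sgn4 a b k d = sgn4 a b c d"
proof -
  have e: "(par a + par b) * (par c + par k) + (par a + par b) * (par k + par d)
      = (par a + par b) * (par c + par d) + 2 * ((par a + par b) * par k)"
    by (simp add: algebra_simps)
  have "sgn4 a b c k * sgn4 a b k d =
     (-1::complex) ^ ((par a + par b) * (par c + par d)) * ((-1)^2) ^ ((par a + par b) * par k)"
    unfolding sgn4_def power_add[symmetric] power_mult[symmetric] e ..
  thus ?thesis by (simp add: sgn4_def)
qed

lemma sgn_cancel1: "sgn4 a b c b * (-1)^par b = sgn4 a b c a * (-1)^par a"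
  unfolding sgn4_def par_def by auto

lemma sgn_cancel2: "a \<noteq> 0 \<Longrightarrow> b \<noteq> 0 \<Longrightarrow>
   sgn4 a b c (-b) * (-1)^par (-b) = sgn4 a b c (-a) * (-1)^par (-a)"
  unfolding sgn4_def par_def by auto

locale qr =
  fixes smul :: "complex \<Rightarrow> 'v::ab_group_add \<Rightarrow> 'v" and N :: nat
    and rho :: "int \<Rightarrow> int \<Rightarrow> 'v \<Rightarrow> 'v"
  assumes qrep: "q_rep smul N rho"
begin

sublocale vs: vector_space smul using qrep by (simp add: q_rep_def)

lemma rho_lin: "i \<in> idx N \<Longrightarrow> j \<in> idx N \<Longrightarrow> Vector_Spaces.linear smul smul (rho i j)"
  using qrep[unfolded q_rep_def, THEN conjunct2, THEN conjunct1, rule_format] .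

lemma rho_add: assumes "i \<in> idx N" "j \<in> idx N" shows "rho i j (x + y) = rho i j x + rho i j y"
proof -
  interpret L: Vector_Spaces.linear smul smul "rho i j" by (rule rho_lin[OF assms])
  show ?thesis by (rule L.add)
qed

lemma rho_scale: assumes "i \<in> idx N" "j \<in> idx N" shows "rho i j (smul c x) = smul c (rho i j x)"
proof -
  interpret L: Vector_Spaces.linear smul smul "rho i j" by (rule rho_lin[OF assms])
  show ?thesis by (rule L.scale)
qed

lemma rho_additive: assumes "i \<in> idx N" "j \<in> idx N" shows "additive (rho i j)"
  by (unfold_locales) (rule rho_add[OF assms])

lemma rho_zero: "i \<in> idx N \<Longrightarrow> j \<in> idx N \<Longrightarrow> rho i j 0 = 0"
  using additive.zero[OF rho_additive] .

lemma rho_diff: "i \<in> idx N \<Longrightarrow> j \<in> idx N \<Longrightarrow> rho i j (x - y) = rho i j x - rho i j y"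
  using additive.diff[OF rho_additive] .

lemma rho_sum: "i \<in> idx N \<Longrightarrow> j \<in> idx N \<Longrightarrow> rho i j (sum g A) = (\<Sum>x\<in>A. rho i j (g x))"
  using additive.sum[OF rho_additive] .

lemmas rel = qrep[unfolded q_rep_def, THEN conjunct2, THEN conjunct2, THEN conjunct2, rule_format]

abbreviation C where "C n \<equiv> Cop smul N rho n"

lemma Cop_lin: "k \<in> idx N \<Longrightarrow> j \<in> idx N \<Longrightarrow>
   C (Suc n) k j (x + y) = C (Suc n) k j x + C (Suc n) k j y \<and>
   C (Suc n) k j (smul c x) = smul c (C (Suc n) k j x)"
proof (induction n arbitrary: k j x y c)
  case 0
  then show ?case by (simp add: rho_add rho_scale)
next
  case (Suc n)
  have h1: "rho k l (smul ((-1)^par l) (C (Suc n) l j (x + y))) =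
     rho k l (smul ((-1)^par l) (C (Suc n) l j x)) + rho k l (smul ((-1)^par l) (C (Suc n) l j y))"
    if l: "l \<in> idx N" for l
  proof -
    have "C (Suc n) l j (x + y) = C (Suc n) l j x + C (Suc n) l j y"
      using Suc.IH[OF l Suc.prems(2)] by blast
    thus ?thesis using l Suc.prems by (simp add: rho_add vs.scale_right_distrib)
  qed
  have h2: "rho k l (smul ((-1)^par l) (C (Suc n) l j (smul c x))) =
     smul c (rho k l (smul ((-1)^par l) (C (Suc n) l j x)))"
    if l: "l \<in> idx N" for l
  proof -
    have "C (Suc n) l j (smul c x) = smul c (C (Suc n) l j x)"
      using Suc.IH[OF l Suc.prems(2)] by blast
    thus ?thesis using l Suc.prems by (simp add: rho_scale mult.commute)
  qed
  have "C (Suc (Suc n)) k j (x + y) = C (Suc (Suc n)) k j x + C (Suc (Suc n)) k j y"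
    unfolding Cop.simps by (simp only: sum.distrib[symmetric]) (rule sum.cong[OF refl h1])
  moreover have "C (Suc (Suc n)) k j (smul c x) = smul c (C (Suc (Suc n)) k j x)"
    unfolding Cop.simps vs.scale_sum_right by (rule sum.cong[OF refl h2])
  ultimately show ?case by blast
qed

lemma Cop_zero: "k \<in> idx N \<Longrightarrow> j \<in> idx N \<Longrightarrow> C (Suc n) k j 0 = 0"
proof -
  assume a: "k \<in> idx N" "j \<in> idx N"
  have "additive (C (Suc n) k j)" by unfold_locales (rule Cop_lin[OF a, THEN conjunct1])
  thus ?thesis by (rule additive.zero)
qed


lemma scale_if: "smul x (if P then y else 0) = (if P then smul x y else 0)"
  by simp

lemma sum_if_const: "(\<Sum>k\<in>A. if P then f k else 0) = (if P then sum f A else 0)"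
  by simp

lemma comm:
  assumes "a \<in> idx N" "b \<in> idx N" "c \<in> idx N" "d \<in> idx N"
  shows "rho a b (C (Suc n) c d w) - smul (sgn4 a b c d) (C (Suc n) c d (rho a b w)) =
     (if c = b then C (Suc n) a d w else 0)
     - smul (sgn4 a b c d) (if a = d then C (Suc n) c b w else 0)
     + (if c = - b then C (Suc n) (- a) d w else 0)
     - smul (sgn4 a b c d) (if - a = d then C (Suc n) c (- b) w else 0)"
  using assms
proof (induction n arbitrary: a b c d w)
  case 0
  then show ?case using rel by simp
next
  case (Suc n)
  define I where "I = idx N"
  define s where "s = sgn4 a b c d"
  let ?C = "C (Suc n)" and ?C2 = "C (Suc (Suc n))"
  have ab: "a \<in> I" "b \<in> I" "c \<in> I" "d \<in> I" using Suc.prems I_def by auto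
  have nab: "- a \<in> I" "- b \<in> I" using ab idx_neg I_def by auto
  have nz: "a \<noteq> 0" "b \<noteq> 0" using ab idx_nz I_def by auto
  have fin: "finite I" using idx_fin I_def by auto
  define R2 where "R2 k = (if k = b then ?C a d w else 0)
     - smul (sgn4 a b k d) (if a = d then ?C k b w else 0)
     + (if k = - b then ?C (- a) d w else 0)
     - smul (sgn4 a b k d) (if - a = d then ?C k (- b) w else 0)" for k
  define R1 where "R1 k = (if c = b then rho a k (smul ((-1)^par k) (?C k d w)) else 0)
     - smul (sgn4 a b c k) (if a = k then rho c b (smul ((-1)^par k) (?C k d w)) else 0)
     + (if c = - b then rho (- a) k (smul ((-1)^par k) (?C k d w)) else 0)
     - smul (sgn4 a b c k) (if - a = k then rho c (- b) (smul ((-1)^par k) (?C k d w)) else 0)" for k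
  define T2 where "T2 k = smul (sgn4 a b c k) (rho c k (smul ((-1)^par k) (R2 k)))" for k
  have step: "rho a b (rho c k (smul ((-1)^par k) (?C k d w))) =
      smul s (rho c k (smul ((-1)^par k) (?C k d (rho a b w)))) + T2 k + R1 k"
    if k: "k \<in> I" for k
  proof -
    have h1: "rho a b (rho c k (smul ((-1)^par k) (?C k d w))) =
       smul (sgn4 a b c k) (rho c k (rho a b (smul ((-1)^par k) (?C k d w)))) + R1 k"
    proof -
      have "rho a b (rho c k (smul ((-1)^par k) (?C k d w))) -
         smul (sgn4 a b c k) (rho c k (rho a b (smul ((-1)^par k) (?C k d w)))) = R1 k"
        using rel[of a b c k "smul ((-1)^par k) (?C k d w)"] ab k I_def unfolding R1_def by simp
      thus ?thesis by (metis diff_add_cancel add.commute)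
    qed
    have h2: "rho a b (?C k d w) = smul (sgn4 a b k d) (?C k d (rho a b w)) + R2 k"
    proof -
      have "rho a b (?C k d w) - smul (sgn4 a b k d) (?C k d (rho a b w)) = R2 k"
        using Suc.IH[of a b k d w] ab k I_def unfolding R2_def by simp
      thus ?thesis by (metis diff_add_cancel add.commute)
    qed
    have m: "s = sgn4 a b c k * sgn4 a b k d" unfolding s_def by (simp add: sgn4_mult)
    have "rho c k (rho a b (smul ((-1)^par k) (?C k d w))) =
        rho c k (smul ((-1)^par k) (smul (sgn4 a b k d) (?C k d (rho a b w))))
        + rho c k (smul ((-1)^par k) (R2 k))"
      using ab k I_def h2 by (simp add: rho_scale rho_add vs.scale_right_distrib)
    hence "smul (sgn4 a b c k) (rho c k (rho a b (smul ((-1)^par k) (?C k d w)))) =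
        smul s (rho c k (smul ((-1)^par k) (?C k d (rho a b w)))) + T2 k"
      using ab k I_def unfolding T2_def m by (simp add: rho_scale vs.scale_right_distrib mult_ac)
    thus ?thesis using h1 by simp
  qed
  have L: "rho a b (?C2 c d w) - smul s (?C2 c d (rho a b w)) = sum T2 I + sum R1 I"
  proof -
    have "rho a b (?C2 c d w) = (\<Sum>k\<in>I. rho a b (rho c k (smul ((-1)^par k) (?C k d w))))"
      using ab I_def by (simp add: rho_sum)
    also have "\<dots> = (\<Sum>k\<in>I. smul s (rho c k (smul ((-1)^par k) (?C k d (rho a b w)))) + T2 k + R1 k)"
      using step by (rule sum.cong[OF refl])
    also have "\<dots> = smul s (?C2 c d (rho a b w)) + sum T2 I + sum R1 I"
      using I_def by (simp add: sum.distrib vs.scale_sum_right)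
    finally show ?thesis by simp
  qed
  have SR1: "sum R1 I = (if c = b then ?C2 a d w else 0)
     - smul (sgn4 a b c a) (rho c b (smul ((-1)^par a) (?C a d w)))
     + (if c = - b then ?C2 (- a) d w else 0)
     - smul (sgn4 a b c (-a)) (rho c (- b) (smul ((-1)^par (-a)) (?C (-a) d w)))"
    unfolding R1_def using ab nab fin I_def
    by (simp add: sum.distrib sum_subtractf scale_if)
  have T2k: "T2 k = (if k = b then smul (sgn4 a b c b) (rho c b (smul ((-1)^par b) (?C a d w))) else 0)
     - (if a = d then smul s (rho c k (smul ((-1)^par k) (?C k b w))) else 0)
     + (if k = - b then smul (sgn4 a b c (-b)) (rho c (-b) (smul ((-1)^par (-b)) (?C (-a) d w))) else 0)
     - (if - a = d then smul s (rho c k (smul ((-1)^par k) (?C k (-b) w))) else 0)"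
    if k: "k \<in> I" for k
  proof -
    have m: "s = sgn4 a b c k * sgn4 a b k d" unfolding s_def by (simp add: sgn4_mult)
    show ?thesis
      unfolding T2_def R2_def m using ab nab nz k I_def
      by (simp add: rho_scale rho_add rho_diff rho_zero vs.scale_right_distrib
          vs.scale_right_diff_distrib mult_ac)
  qed
  have ST2: "sum T2 I = smul (sgn4 a b c b) (rho c b (smul ((-1)^par b) (?C a d w)))
     - (if a = d then smul s (?C2 c b w) else 0)
     + smul (sgn4 a b c (-b)) (rho c (-b) (smul ((-1)^par (-b)) (?C (-a) d w)))
     - (if - a = d then smul s (?C2 c (- b) w) else 0)"
    using ab nab fin I_def
    by (simp add: T2k sum.distrib sum_subtractf vs.scale_sum_right)
  have c1: "smul (sgn4 a b c b) (rho c b (smul ((-1)^par b) (?C a d w))) =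
     smul (sgn4 a b c a) (rho c b (smul ((-1)^par a) (?C a d w)))"
    using ab I_def by (simp add: rho_scale sgn_cancel1)
  have c2: "smul (sgn4 a b c (-b)) (rho c (-b) (smul ((-1)^par (-b)) (?C (-a) d w))) =
     smul (sgn4 a b c (-a)) (rho c (-b) (smul ((-1)^par (-a)) (?C (-a) d w)))"
    using ab nab nz I_def by (simp add: rho_scale sgn_cancel2)
  show ?case
    unfolding L[unfolded s_def] SR1 ST2[unfolded s_def c1 c2]
    by (simp add: scale_if algebra_simps)
qed

end

theorem mainTheorem4:
  fixes smul :: "complex \<Rightarrow> 'v::ab_group_add \<Rightarrow> 'v"
    and N :: nat and rho :: "int \<Rightarrow> int \<Rightarrow> 'v \<Rightarrow> 'v"
    and v :: 'v and lam :: "int \<Rightarrow> complex"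
  assumes "N \<ge> 1"
    and "q_rep smul N rho"
    and "\<forall>i\<in>idx N. \<forall>j\<in>idx N. \<bar>i\<bar> < \<bar>j\<bar> \<longrightarrow> rho i j v = 0"
    and "\<forall>i\<in>{1..int N}. rho i i v = smul (lam i) v"
  shows "\<forall>n\<ge>1. \<forall>i\<in>idx N. \<forall>j\<in>idx N. \<bar>i\<bar> < \<bar>j\<bar> \<longrightarrow> Cop smul N rho n i j v = 0"
proof -
  interpret qr smul N rho by (rule qr.intro) (rule assms(2))
  have main: "\<forall>i\<in>idx N. \<forall>j\<in>idx N. \<bar>i\<bar> < \<bar>j\<bar> \<longrightarrow> Cop smul N rho (Suc n) i j v = 0" for n
  proof (induction n)
    case 0
    then show ?case using assms(3) by simp
  next
    case (Suc n)
    show ?case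
    proof (intro ballI impI)
      fix i j assume i: "i \<in> idx N" and j: "j \<in> idx N" and ij: "\<bar>i\<bar> < \<bar>j\<bar>"
      have z: "rho i k (smul ((-1)^par k) (Cop smul N rho (Suc n) k j v)) = 0" if k: "k \<in> idx N" for k
      proof (cases "\<bar>k\<bar> < \<bar>j\<bar>")
        case True
        then have "Cop smul N rho (Suc n) k j v = 0" using Suc.IH k j by blast
        then show ?thesis using i k by (simp add: rho_zero)
      next
        case False
        hence ik: "\<bar>i\<bar> < \<bar>k\<bar>" using ij by simp
        have rik: "rho i k v = 0" using assms(3) i k ik by blast
        have cij: "Cop smul N rho (Suc n) i j v = 0" using Suc.IH i j ij by blast
        have k0: "k \<noteq> - k" using idx_nz[OF k] by simp
        have n1: "i \<noteq> j" "- i \<noteq> j" using ij by auto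
        have "rho i k (Cop smul N rho (Suc n) k j v) = 0"
          using comm[OF i k k j, of n v] rik cij Cop_zero[OF k j] k0 n1 by simp
        then show ?thesis using i k by (simp add: rho_scale)
      qed
      show "Cop smul N rho (Suc (Suc n)) i j v = 0"
        using z by simp
    qed
  qed
  show ?thesis
  proof (intro allI impI)
    fix n :: nat assume "n \<ge> 1"
    then obtain m where "n = Suc m" by (cases n) auto
    then show "\<forall>i\<in>idx N. \<forall>j\<in>idx N. \<bar>i\<bar> < \<bar>j\<bar> \<longrightarrow> Cop smul N rho n i j v = 0"
      using main by simp
  qed
qed

end
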